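(* Let $E$ be a real Banach space and let $\mathcal F\subseteq H[E]_+$ be upwards directed and pointwise bounded. Define $g:E^*\to\mathbb R_+$ by $g(x^* )=\sup\{f(x^* ):f\in\mathcal F\}$. Then $g\in H[E]_+$ and $\|g\|_{FBL[E]}=\sup\{\|f\|_{FBL[E]}:f\in\mathcal F\}$ (both sides possibly infinite).
   Context: For a real Banach space $E$ with dual $E^*$ and closed unit ball $B_E$, let $H[E]$ be the vector space of all positively homogeneous functions $f:E^*\to\mathbb R$ ($f(\lambda x^* )=\lambda f(x^* )$ for $\lambda>0$), ordered pointwise; $H[E]_+$ denotes its nonnegative elements. For $f\in H[E]$ put $\|f\|_{FBL[E]}:=\sup\{\sum_{k=1}^n|f(x_k^* )| : n\in\mathbb N,\ x_1^*,\dots,x_n^*\in E^*,\ \sup_{x\in B_E}\sum_{k=1}^n|x_k^*(x)|\le 1\}\in[0,\infty]$. *)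

theory Defs
  imports "HOL-Analysis.Analysis"
begin

text \<open>The dual space E* is modelled by the type of bounded linear functionals
  (blinfun type). H[E]: positively homogeneous real functions on E*.\<close>

definition pos_homog :: "(('a::real_normed_vector \<Rightarrow>\<^sub>L real) \<Rightarrow> real) \<Rightarrow> bool" where
  "pos_homog f \<longleftrightarrow> (\<forall>r::real. \<forall>x. r > 0 \<longrightarrow> f (r *\<^sub>R x) = r * f x)"

definition H_plus :: "(('a::real_normed_vector \<Rightarrow>\<^sub>L real) \<Rightarrow> real) set" where
  "H_plus = {f. pos_homog f \<and> (\<forall>x. 0 \<le> f x)}"

definition fbl_norm :: "(('a::real_normed_vector \<Rightarrow>\<^sub>L real) \<Rightarrow> real) \<Rightarrow> ereal" where
  "fbl_norm f = (SUP xs \<in> {xs :: ('a \<Rightarrow>\<^sub>L real) list. xs \<noteq> [] \<and>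
       (\<forall>x. norm x \<le> 1 \<longrightarrow> (\<Sum>xk\<leftarrow>xs. \<bar>blinfun_apply xk x\<bar>) \<le> 1)}.
       ereal (\<Sum>xk\<leftarrow>xs. \<bar>f xk\<bar>))"

end

theory Submission
  imports Defs
begin

lemma approx_list:
  fixes \<F> :: "(('a::real_normed_vector \<Rightarrow>\<^sub>L real) \<Rightarrow> real) set"
  assumes nonempty: "\<F> \<noteq> {}"
    and directed: "\<forall>f\<in>\<F>. \<forall>h\<in>\<F>. \<exists>k\<in>\<F>. f \<le> k \<and> h \<le> k"
    and eps: "e > 0"
    and bounded: "\<forall>x. bdd_above ((\<lambda>f. f x) ` \<F>)"
  shows "\<exists>f\<in>\<F>. \<forall>x\<in>set xs. (SUP f\<in>\<F>. f x) - e < f x"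
proof (induction xs)
  case Nil
  then show ?case using nonempty by auto
next
  case (Cons a xs)
  then obtain f where f: "f\<in>\<F>" "\<forall>x\<in>set xs. (SUP f\<in>\<F>. f x) - e < f x" by blast
  have "(SUP f\<in>\<F>. f a) - e < (SUP f\<in>\<F>. f a)" using eps by simp
  then obtain h where h: "h \<in> \<F>" "(SUP f\<in>\<F>. f a) - e < h a"
    using less_cSUP_iff[OF nonempty bounded[rule_format, of a]] by blast
  obtain k where k: "k\<in>\<F>" "f \<le> k" "h \<le> k" using directed f h by blast
  show ?case
  proof (intro bexI[OF _ k(1)] ballI)
    fix x assume "x \<in> set (a#xs)"
    then show "(SUP f\<in>\<F>. f x) - e < k x"
      using f h k by (auto simp: le_fun_def intro: less_le_trans)
  qed
qed

theorem lemma4p2: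
  fixes \<F> :: "(('a::banach \<Rightarrow>\<^sub>L real) \<Rightarrow> real) set"
  assumes sub: "\<F> \<subseteq> H_plus"
    and nonempty: "\<F> \<noteq> {}"
    and directed: "\<forall>f\<in>\<F>. \<forall>h\<in>\<F>. \<exists>k\<in>\<F>. f \<le> k \<and> h \<le> k"
    and bounded: "\<forall>x. bdd_above ((\<lambda>f. f x) ` \<F>)"
  defines "g \<equiv> (\<lambda>x. SUP f\<in>\<F>. f x)"
  shows "g \<in> H_plus \<and> fbl_norm g = (SUP f\<in>\<F>. fbl_norm f)"
proof -
  have upper: "f x \<le> g x" if "f \<in> \<F>" for f x
    unfolding g_def using bounded that by (auto intro: cSUP_upper)
  have fnn: "0 \<le> f x" if "f \<in> \<F>" for f x using sub that by (auto simp: H_plus_def)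
  have fhom: "f (r *\<^sub>R x) = r * f x" if "f \<in> \<F>" "r > 0" for f x r
    using sub that by (auto simp: H_plus_def pos_homog_def)
  obtain f0 where f0: "f0 \<in> \<F>" using nonempty by blast
  have gnn: "0 \<le> g x" for x using fnn[OF f0] upper[OF f0] order_trans by blast
  have ghom: "g (r *\<^sub>R x) = r * g x" if r: "r > 0" for r x
  proof (rule antisym)
    show "g (r *\<^sub>R x) \<le> r * g x"
      unfolding g_def
    proof (rule cSUP_least[OF nonempty])
      fix f assume "f \<in> \<F>"
      then have "f (r *\<^sub>R x) = r * f x" "f x \<le> (SUP f\<in>\<F>. f x)"
        using fhom r upper[unfolded g_def] by auto
      then show "f (r *\<^sub>R x) \<le> r * (SUP f\<in>\<F>. f x)"
        using r by (simp add: mult_left_mono)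
    qed
    have "g x \<le> g (r *\<^sub>R x) / r"
      unfolding g_def
    proof (rule cSUP_least[OF nonempty])
      fix f assume f: "f \<in> \<F>"
      have "f x = f (r *\<^sub>R x) / r" using fhom[OF f r] r by simp
      also have "\<dots> \<le> (SUP f\<in>\<F>. f (r *\<^sub>R x)) / r"
        using upper[OF f, unfolded g_def] r by (simp add: divide_right_mono)
      finally show "f x \<le> (SUP f\<in>\<F>. f (r *\<^sub>R x)) / r" .
    qed
    then show "r * g x \<le> g (r *\<^sub>R x)" using r by (simp add: field_simps)
  qed
  have gH: "g \<in> H_plus" using gnn ghom by (auto simp: H_plus_def pos_homog_def)
  define A where "A = {xs :: ('a \<Rightarrow>\<^sub>L real) list. xs \<noteq> [] \<and>
       (\<forall>x. norm x \<le> 1 \<longrightarrow> (\<Sum>xk\<leftarrow>xs. \<bar>blinfun_apply xk x\<bar>) \<le> 1)}"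
  have fn: "fbl_norm f = (SUP xs\<in>A. ereal (\<Sum>xk\<leftarrow>xs. \<bar>f xk\<bar>))" for f
    unfolding fbl_norm_def A_def ..
  have ge: "fbl_norm f \<le> fbl_norm g" if f: "f \<in> \<F>" for f
    unfolding fn
  proof (rule SUP_mono)
    fix xs assume "xs \<in> A"
    have "(\<Sum>xk\<leftarrow>xs. \<bar>f xk\<bar>) \<le> (\<Sum>xk\<leftarrow>xs. \<bar>g xk\<bar>)"
      by (rule sum_list_mono) (use fnn[OF f] upper[OF f] gnn in auto)
    then show "\<exists>m\<in>A. ereal (\<Sum>xk\<leftarrow>xs. \<bar>f xk\<bar>) \<le> ereal (\<Sum>xk\<leftarrow>m. \<bar>g xk\<bar>)"
      using \<open>xs \<in> A\<close> by auto
  qed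
  have le: "fbl_norm g \<le> (SUP f\<in>\<F>. fbl_norm f)"
    unfolding fn[of g]
  proof (rule SUP_least)
    fix xs assume xs: "xs \<in> A"
    then have n: "length xs > 0" by (auto simp: A_def)
    define s where "s = (\<Sum>xk\<leftarrow>xs. \<bar>g xk\<bar>)"
    show "ereal (\<Sum>xk\<leftarrow>xs. \<bar>g xk\<bar>) \<le> (SUP f\<in>\<F>. fbl_norm f)"
      unfolding s_def[symmetric]
    proof (rule dense_le)
      fix y assume y: "y < ereal s"
      show "y \<le> (SUP f\<in>\<F>. fbl_norm f)"
      proof (cases y)
        case (real r)
        with y have rs: "r < s" by simp
        define e where "e = (s - r) / length xs"
        have e: "e > 0" using rs n by (simp add: e_def)
        obtain f where f: "f \<in> \<F>" "\<forall>x\<in>set xs. g x - e < f x"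
          using approx_list[OF nonempty directed e bounded, of xs] unfolding g_def by blast
        have "(\<Sum>xk\<leftarrow>xs. g xk - e) \<le> (\<Sum>xk\<leftarrow>xs. \<bar>f xk\<bar>)"
          by (rule sum_list_mono) (use f in auto)
        moreover have "(\<Sum>xk\<leftarrow>xs. g xk - e) = s - length xs * e"
          unfolding s_def using gnn by (simp add: sum_list_subtractf sum_list_triv)
        moreover have "s - length xs * e = r" using n by (simp add: e_def)
        ultimately have "ereal r \<le> ereal (\<Sum>xk\<leftarrow>xs. \<bar>f xk\<bar>)" by simp
        also have "\<dots> \<le> fbl_norm f" unfolding fn using xs by (rule SUP_upper)
        also have "\<dots> \<le> (SUP f\<in>\<F>. fbl_norm f)" using f(1) by (rule SUP_upper)
        finally show ?thesis using real by simp
      qed (use y in auto)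
    qed
  qed
  have "(SUP f\<in>\<F>. fbl_norm f) \<le> fbl_norm g" using ge by (rule SUP_least)
  with le gH show ?thesis by auto
qed

end
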